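(* Let $X$ be a compactum, $Y$ a compactum in the Hilbert cube $I^\infty$, and $Y_1\supset Y_2\supset\cdots$ compact neighbourhoods of $Y$ in $I^\infty$ which are prisms, with $\bigcap_kY_k=Y$ and $p_k:Y_{k+1}\to Y_k$ the inclusions. Given an approximative map $\{f_k\}_{k\in\mathbb{N}}$ with $f_k:X\to Y_k$, there exists an approximative map $\{f'_k\}_{k\in\mathbb{N}}$ with $f'_k:X\to Y_k$ such that $p_k\circ f'_{k+1}\simeq f'_k$ in $Y_k$ for all $k\in\mathbb{N}$ and $\{f_k\}\simeq\{f'_k\}$.
   Context: A compactum is a compact metric space. A prism is a space homeomorphic to $P\times I^\infty$ with $P$ a compact polyhedron. An approximative map of $X$ towards $Y$ (relative to $(Y_k)$) is a sequence of continuous maps $f_k:X\to Y_k$ such that for every $N$ there is $m(N)$ with $p_t\circ f_{t+1}\simeq f_t$ in $Y_N$ (i.e. homotopic as maps into $Y_N$) for all $t\ge m(N)$. Two approximative maps $\{f_k\},\{g_k\}$ are homotopic, $\{f_k\}\simeq\{g_k\}$, if for every neighbourhood $V$ of $Y$ in $I^\infty$ there is $k_0$ with $f_k\simeq g_k$ in $V$ for all $k\ge k_0$. *)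

theory Defs
  imports "HOL-Analysis.Analysis"
begin

definition hilbert_cube :: "(nat \<Rightarrow> real) topology" where
  "hilbert_cube = product_topology (\<lambda>_. top_of_set {0..1::real}) (UNIV :: nat set)"

definition compactum :: "'a topology \<Rightarrow> bool" where
  "compactum X \<longleftrightarrow> compact_space X \<and> metrizable_space X"

text \<open>R^n is realised inside nat => real as the sequences vanishing from index n on.
  Convex hull of a finite set of points, written out coordinatewise.\<close>
definition conv_hull_seq :: "(nat \<Rightarrow> real) set \<Rightarrow> (nat \<Rightarrow> real) set" where
  "conv_hull_seq V = {x. \<exists>c. (\<forall>v\<in>V. 0 \<le> c v) \<and> sum c V = 1 \<and> x = (\<lambda>i. \<Sum>v\<in>V. c v * v i)}"

definition compact_polyhedron :: "(nat \<Rightarrow> real) set \<Rightarrow> bool" where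
  "compact_polyhedron P \<longleftrightarrow>
     (\<exists>n F. finite F \<and> (\<forall>V\<in>F. finite V \<and> V \<noteq> {} \<and> V \<subseteq> {x. \<forall>i\<ge>n. x i = 0})
            \<and> P = \<Union>(conv_hull_seq ` F))"

definition prism :: "'a topology \<Rightarrow> bool" where
  "prism T \<longleftrightarrow> (\<exists>P. compact_polyhedron P \<and>
      T homeomorphic_space prod_topology (subtopology (powertop_real UNIV) P) hilbert_cube)"

definition homotopic_in :: "'a topology \<Rightarrow> (nat \<Rightarrow> real) set \<Rightarrow> ('a \<Rightarrow> nat \<Rightarrow> real) \<Rightarrow> ('a \<Rightarrow> nat \<Rightarrow> real) \<Rightarrow> bool" where
  "homotopic_in X S f g \<longleftrightarrow> homotopic_with (\<lambda>_. True) X (subtopology hilbert_cube S) f g"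

definition approximative_map :: "'a topology \<Rightarrow> (nat \<Rightarrow> (nat \<Rightarrow> real) set) \<Rightarrow> (nat \<Rightarrow> 'a \<Rightarrow> nat \<Rightarrow> real) \<Rightarrow> bool" where
  "approximative_map X Ys f \<longleftrightarrow>
     (\<forall>k. continuous_map X (subtopology hilbert_cube (Ys k)) (f k)) \<and>
     (\<forall>N. \<exists>m. \<forall>t\<ge>m. homotopic_in X (Ys N) (f (Suc t)) (f t))"

definition approx_homotopic :: "'a topology \<Rightarrow> (nat \<Rightarrow> real) set \<Rightarrow> (nat \<Rightarrow> 'a \<Rightarrow> nat \<Rightarrow> real) \<Rightarrow> (nat \<Rightarrow> 'a \<Rightarrow> nat \<Rightarrow> real) \<Rightarrow> bool" where
  "approx_homotopic X Y f g \<longleftrightarrow>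
     (\<forall>V. V \<subseteq> topspace hilbert_cube \<and> (\<exists>U. openin hilbert_cube U \<and> Y \<subseteq> U \<and> U \<subseteq> V) \<longrightarrow>
        (\<exists>k0. \<forall>k\<ge>k0. homotopic_in X V (f k) (g k)))"

end

theory Submission
  imports Defs
begin

lemma hin_mono:
  assumes "homotopic_in X S f g" "S \<subseteq> T"
  shows "homotopic_in X T f g"
proof -
  obtain h where h: "continuous_map (prod_topology (top_of_set {0..1::real}) X) (subtopology hilbert_cube S) h"
    "\<forall>x. h (0, x) = f x" "\<forall>x. h (1, x) = g x"
    using assms(1) unfolding homotopic_in_def homotopic_with_def by auto
  have "continuous_map (prod_topology (top_of_set {0..1::real}) X) (subtopology hilbert_cube T) h"
    using h(1) assms(2) by (auto simp: continuous_map_in_subtopology)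
  then show ?thesis using h unfolding homotopic_in_def homotopic_with_def by auto
qed

lemma hin_chain:
  assumes "a \<le> b" "continuous_map X (subtopology hilbert_cube S) (f a)"
    "\<And>t. a \<le> t \<Longrightarrow> t < b \<Longrightarrow> homotopic_in X S (f (Suc t)) (f t)"
  shows "homotopic_in X S (f b) (f a)"
  using assms(1,3)
proof (induction b rule: dec_induct)
  case base
  then show ?case using assms(2) by (simp add: homotopic_in_def)
next
  case (step n)
  then have "homotopic_in X S (f n) (f a)" by auto
  moreover have "homotopic_in X S (f (Suc n)) (f n)" using step by auto
  ultimately show ?case unfolding homotopic_in_def using homotopic_with_trans by blast
qed

lemma hausdorff_hc: "Hausdorff_space hilbert_cube"
  unfolding hilbert_cube_def
  by (metis Hausdorff_space_euclidean Hausdorff_space_product_topology Hausdorff_space_subtopology)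

theorem proposition9p1:
  fixes X :: "'a topology"
    and Y :: "(nat \<Rightarrow> real) set"
    and Ys :: "nat \<Rightarrow> (nat \<Rightarrow> real) set"
    and f :: "nat \<Rightarrow> 'a \<Rightarrow> nat \<Rightarrow> real"
  assumes "compactum X"
    and "Y \<subseteq> topspace hilbert_cube" and "compactin hilbert_cube Y"
    and "\<And>k. compactin hilbert_cube (Ys k)"
    and "\<And>k. Y \<subseteq> hilbert_cube interior_of (Ys k)"
    and "\<And>k. prism (subtopology hilbert_cube (Ys k))"
    and "\<And>k. Ys (Suc k) \<subseteq> Ys k"
    and "(\<Inter>k. Ys k) = Y"
    and "approximative_map X Ys f"
  shows "\<exists>f'. approximative_map X Ys f' \<and>
           (\<forall>k. homotopic_in X (Ys k) (f' (Suc k)) (f' k)) \<and>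
           approx_homotopic X Y f f'"
proof -
  have dec: "\<And>i j. i \<le> j \<Longrightarrow> Ys j \<subseteq> Ys i"
    using assms(7) by (metis lift_Suc_antimono_le)
  have cont: "\<And>k. continuous_map X (subtopology hilbert_cube (Ys k)) (f k)"
    using assms(9) unfolding approximative_map_def by auto
  have "\<forall>N. \<exists>m. \<forall>t\<ge>m. homotopic_in X (Ys N) (f (Suc t)) (f t)"
    using assms(9) unfolding approximative_map_def by auto
  then obtain M where M: "\<And>N t. t \<ge> M N \<Longrightarrow> homotopic_in X (Ys N) (f (Suc t)) (f t)"
    by metis
  define m where "m k = k + (\<Sum>i\<le>k. M i)" for k
  have mge: "k \<le> m k" "M k \<le> m k" for k
    unfolding m_def by (auto intro: order_trans[OF _ le_add2] member_le_sum)
  have mmono: "m k \<le> m (Suc k)" for k unfolding m_def by simp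
  have mmono': "i \<le> j \<Longrightarrow> m i \<le> m j" for i j
    using mmono by (metis lift_Suc_mono_le)
  have contk: "continuous_map X (subtopology hilbert_cube (Ys k)) (f j)" if "k \<le> j" for j k
    using cont[of j] dec[OF that] by (auto simp: continuous_map_in_subtopology)
  define f' where "f' k = f (m k)" for k
  have step: "homotopic_in X (Ys k) (f' (Suc k)) (f' k)" for k
    unfolding f'_def
  proof (rule hin_chain[OF mmono])
    show "continuous_map X (subtopology hilbert_cube (Ys k)) (f (m k))" by (rule contk[OF mge(1)])
    fix t assume "m k \<le> t"
    then have "M k \<le> t" using mge(2)[of k] by linarith
    then show "homotopic_in X (Ys k) (f (Suc t)) (f t)" by (rule M)
  qed
  have cont': "continuous_map X (subtopology hilbert_cube (Ys k)) (f' k)" for k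
    unfolding f'_def using contk mge by auto
  have am: "approximative_map X Ys f'"
    unfolding approximative_map_def
  proof (intro conjI allI)
    fix N show "\<exists>m. \<forall>t\<ge>m. homotopic_in X (Ys N) (f' (Suc t)) (f' t)"
    proof (rule exI[of _ N], intro allI impI)
      fix t assume "N \<le> t"
      show "homotopic_in X (Ys N) (f' (Suc t)) (f' t)"
        by (rule hin_mono[OF step dec[OF \<open>N \<le> t\<close>]])
    qed
  qed (rule cont')
  have ah: "approx_homotopic X Y f f'"
    unfolding approx_homotopic_def
  proof (intro allI impI)
    fix V assume "V \<subseteq> topspace hilbert_cube \<and> (\<exists>U. openin hilbert_cube U \<and> Y \<subseteq> U \<and> U \<subseteq> V)"
    then obtain U where U: "openin hilbert_cube U" "Y \<subseteq> U" "U \<subseteq> V" by auto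
    have cl: "closedin hilbert_cube (Ys k)" for k
      using compactin_imp_closedin[OF hausdorff_hc assms(4)] .
    have C: "compactin hilbert_cube (Ys 0 - U)"
      by (rule closed_compactin[OF assms(4)[of 0]]) (use cl U in auto)
    have cov: "Ys 0 - U \<subseteq> \<Union>(range (\<lambda>k. topspace hilbert_cube - Ys k))"
    proof
      fix x assume x: "x \<in> Ys 0 - U"
      then have "x \<notin> Y" using U(2) by blast
      then obtain k where "x \<notin> Ys k" using assms(8) by blast
      moreover have "x \<in> topspace hilbert_cube" using x closedin_subset[OF cl[of 0]] by blast
      ultimately show "x \<in> \<Union>(range (\<lambda>k. topspace hilbert_cube - Ys k))" by blast
    qed
    obtain F where F: "finite F" "F \<subseteq> range (\<lambda>k. topspace hilbert_cube - Ys k)" "Ys 0 - U \<subseteq> \<Union>F"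
    proof -
      have op: "\<forall>B\<in>range (\<lambda>k. topspace hilbert_cube - Ys k). openin hilbert_cube B"
        using cl by (simp add: openin_diff)
      have "\<forall>\<U>. (\<forall>B\<in>\<U>. openin hilbert_cube B) \<and> Ys 0 - U \<subseteq> \<Union>\<U> \<longrightarrow>
          (\<exists>\<F>. finite \<F> \<and> \<F> \<subseteq> \<U> \<and> Ys 0 - U \<subseteq> \<Union>\<F>)"
        using C unfolding compactin_def by (rule conjunct2)
      then have "\<exists>\<F>. finite \<F> \<and> \<F> \<subseteq> range (\<lambda>k. topspace hilbert_cube - Ys k) \<and> Ys 0 - U \<subseteq> \<Union>\<F>"
        using op cov by (elim allE[of _ "range (\<lambda>k. topspace hilbert_cube - Ys k)"]) (simp only: simp_thms)
      then show ?thesis using that by blast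
    qed
    obtain I where I: "finite I" "F = (\<lambda>k. topspace hilbert_cube - Ys k) ` I"
      using F(1,2) by (meson finite_subset_image)
    define K where "K = Max (insert 0 I)"
    have KI: "i \<in> I \<Longrightarrow> i \<le> K" for i unfolding K_def using I(1) by auto
    have YK: "Ys K \<subseteq> U"
    proof
      fix x assume x: "x \<in> Ys K"
      show "x \<in> U"
      proof (rule ccontr)
        assume "x \<notin> U"
        with x dec[of 0 K] have "x \<in> \<Union>F" using F(3) by auto
        then obtain i where "i \<in> I" "x \<notin> Ys i" using I(2) by auto
        then show False using x dec[OF KI[of i]] by blast
      qed
    qed
    show "\<exists>k0. \<forall>k\<ge>k0. homotopic_in X V (f k) (f' k)"
    proof (intro exI allI impI)
      fix k assume k: "max K (M K) \<le> k"
      have "homotopic_in X (Ys K) (f (m k)) (f k)"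
      proof (rule hin_chain[of k "m k"])
        show "k \<le> m k" by (rule mge)
        show "continuous_map X (subtopology hilbert_cube (Ys K)) (f k)" by (rule contk) (use k in linarith)
        fix t assume "k \<le> t"
        then have "M K \<le> t" using k by linarith
        then show "homotopic_in X (Ys K) (f (Suc t)) (f t)" by (rule M)
      qed
      then have "homotopic_in X V (f (m k)) (f k)"
        using hin_mono YK U(3) by blast
      then show "homotopic_in X V (f k) (f' k)"
        unfolding f'_def homotopic_in_def using homotopic_with_sym by blast
    qed
  qed
  show ?thesis using am step ah by blast
qed

end
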